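(* With the notation of the context, the joint distribution of $(\bar M,T,X,Z,R)$ satisfies $\widetilde p_{\bar M\,T\,X\,Z\,R}=\widetilde q_{\bar M\,T\,X\,Z\,R}$, where $$\widetilde q_{\bar M TXZR}(\bar m,t,x,z,\rho)\triangleq \widetilde p_{XZ|T}(x,z|t)\,2^{-n}\,|\mathcal{R}|^{-1}\,\mathds{1}\{\bar m=F(\rho,t)\},$$ i.e., under $\widetilde q$, $T$ is uniform on $\{0,1\}^n$, $R$ is uniform on $\mathcal{R}$ and independent of $T$, $(X,Z)$ is generated from $T$ by $\widetilde p_{XZ|T}$, and $\bar M=F(R,T)$.
   Context: Let $n\geq r$ be positive integers and identify $\{0,1\}^n$ with the finite field $\mathrm{GF}(2^n)$ (via a fixed basis); $\odot$ denotes field multiplication, $\|$ concatenation of bit strings. Let $\mathcal{R}=\{0,1\}^n\setminus\{\mathbf 0\}$. Let $\bar M$ be uniform on $\{0,1\}^r$, $R$ uniform on $\mathcal{R}$, $R'$ uniform on $\{0,1\}^{n-r}$, mutually independent, and define $T=R^{-1}\odot(\bar M\|R')$. Let $(X,Z)$ be random variables generated from $T$ through a conditional distribution $\widetilde p_{XZ|T}$ (in the paper, the one induced by the sub-block encoder and the eavesdropper's channel), conditionally independent of $(\bar M,R,R')$ given $T$; $\widetilde p$ denotes the resulting joint distribution. Define $F:\mathcal{R}\times\{0,1\}^n\to\{0,1\}^r$ by $F(\rho,t)=(\rho\odot t)|_{1:r}$, the leftmost $r$ bits of $\rho\odot t$. *)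

theory Defs
  imports "HOL-Probability.Probability"
begin

text \<open>Bit strings of length n are bool lists; the field GF(2^n) is an abstract finite field type
  'f with 2^n elements, identified with bit strings via a bijection enc (fixed basis).\<close>

definition Fmap :: "('f::field \<Rightarrow> bool list) \<Rightarrow> nat \<Rightarrow> 'f \<Rightarrow> 'f \<Rightarrow> bool list" where
  "Fmap enc r \<rho> t = take r (enc (\<rho> * t))"

definition ptilde :: "('f::{field,finite} \<Rightarrow> bool list) \<Rightarrow> nat \<Rightarrow> nat \<Rightarrow> ('f \<Rightarrow> ('x \<times> 'z) pmf)
    \<Rightarrow> (bool list \<times> 'f \<times> 'x \<times> 'z \<times> 'f) pmf" where
  "ptilde enc n r W =
     do { m \<leftarrow> pmf_of_set {xs. length xs = r};
          \<rho> \<leftarrow> pmf_of_set (UNIV - {0});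
          r' \<leftarrow> pmf_of_set {xs. length xs = n - r};
          let t = inverse \<rho> * inv enc (m @ r');
          xz \<leftarrow> W t;
          return_pmf (m, t, fst xz, snd xz, \<rho>) }"

end

theory Submission
  imports Defs
begin

lemma card_bool_lists: "card {xs::bool list. length xs = k} = 2 ^ k"
proof -
  have "{xs::bool list. length xs = k} = {xs. set xs \<subseteq> UNIV \<and> length xs = k}" by auto
  then show ?thesis using card_lists_length_eq[of "UNIV::bool set" k] by simp
qed

lemma finite_bool_lists: "finite {xs::bool list. length xs = k}"
proof -
  have "{xs::bool list. length xs = k} = {xs. set xs \<subseteq> UNIV \<and> length xs = k}" by auto
  then show ?thesis using finite_lists_length_eq[of "UNIV::bool set" k] by simp
qed

lemma ne_bool_lists: "{xs::bool list. length xs = k} \<noteq> {}"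
proof -
  have "replicate k True \<in> {xs::bool list. length xs = k}" by simp
  then show ?thesis by blast
qed

lemma inner_pmf:
  fixes W :: "'t \<Rightarrow> ('a \<times> 'b) pmf"
  shows "pmf (W t' \<bind> (\<lambda>xz. return_pmf (m', t', fst xz, snd xz, \<rho>'))) (m, t, x, z, \<rho>) =
   (if m' = m \<and> t' = t \<and> \<rho>' = \<rho> then pmf (W t) (x, z) else 0)"
proof -
  have e: "W t' \<bind> (\<lambda>xz. return_pmf (m', t', fst xz, snd xz, \<rho>')) =
     map_pmf (\<lambda>xz. (m', t', fst xz, snd xz, \<rho>')) (W t')"
    unfolding map_pmf_def by (rule refl)
  have v: "(\<lambda>xz. (m', t', fst xz, snd xz, \<rho>')) -` {(m, t, x, z, \<rho>)} =
     (if m' = m \<and> t' = t \<and> \<rho>' = \<rho> then {(x, z)} else {})"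
    by (auto simp: prod_eq_iff)
  show ?thesis
    unfolding e pmf_map v by (simp add: measure_pmf_single)
qed

theorem lemma4:
  fixes enc :: "'f::{field,finite} \<Rightarrow> bool list"
    and n r :: nat
    and W :: "'f \<Rightarrow> ('x \<times> 'z) pmf"
  assumes card: "CARD('f) = 2 ^ n"
    and bij: "bij_betw enc UNIV {xs. length xs = n}"
    and lin: "\<forall>a b. enc (a + b) = map2 (\<noteq>) (enc a) (enc b)"
    and r_pos: "0 < r" and rn: "r \<le> n"
  shows "\<forall>m t x z \<rho>. pmf (ptilde enc n r W) (m, t, x, z, \<rho>) =
     (if \<rho> \<noteq> 0 then
        pmf (W t) (x, z) * (1 / 2 ^ n) * (1 / real (card (UNIV - {0::'f})))
          * (if m = Fmap enc r \<rho> t then 1 else 0)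
      else 0)"
proof (intro allI)
  fix m t x z and \<rho> :: 'f
  define Lr where "Lr = {xs::bool list. length xs = r}"
  define Ln where "Ln = {xs::bool list. length xs = n - r}"
  define U where "U = (UNIV - {0::'f})"
  define pW where "pW = pmf (W t) (x, z)"
  have injE: "inj enc" using bij bij_betw_def by blast
  have lenE: "\<And>a. length (enc a) = n" using bij by (auto simp: bij_betw_def)
  have rangeE: "\<And>l. length l = n \<Longrightarrow> enc (inv enc l) = l"
    using bij_betw_inv_into_right[OF bij] by simp
  have fU: "finite U" "U \<noteq> {}"
  proof -
    show "finite U" by simp
    have "(1::'f) \<in> U" by (simp add: U_def)
    then show "U \<noteq> {}" by blast
  qed
  have neLr: "Lr \<noteq> {}" unfolding Lr_def by (rule ne_bool_lists)
  have fLr: "finite Lr" unfolding Lr_def by (rule finite_bool_lists)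
  have neLn: "Ln \<noteq> {}" unfolding Ln_def by (rule ne_bool_lists)
  have fLn: "finite Ln" unfolding Ln_def by (rule finite_bool_lists)
  have unf: "pmf (ptilde enc n r W) (m, t, x, z, \<rho>) =
    (\<Sum>m'\<in>Lr. (\<Sum>\<rho>'\<in>U. (\<Sum>r'\<in>Ln.
       (if m' = m \<and> inverse \<rho>' * inv enc (m' @ r') = t \<and> \<rho>' = \<rho> then pW else 0))
        / real (card Ln)) / real (card U)) / real (card Lr)"
    unfolding ptilde_def Let_def Lr_def[symmetric] Ln_def[symmetric] U_def[symmetric]
    apply (simp only: pmf_bind_pmf_of_set[OF neLr fLr] pmf_bind_pmf_of_set[OF fU(2,1)]
       pmf_bind_pmf_of_set[OF neLn fLn])
    apply (simp only: inner_pmf pW_def)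
    done
  show "pmf (ptilde enc n r W) (m, t, x, z, \<rho>) =
     (if \<rho> \<noteq> 0 then
        pmf (W t) (x, z) * (1 / 2 ^ n) * (1 / real (card (UNIV - {0::'f})))
          * (if m = Fmap enc r \<rho> t then 1 else 0)
      else 0)"
  proof (cases "\<rho> = 0")
    case True
    then have "\<And>\<rho>'. \<rho>' \<in> U \<Longrightarrow> \<rho>' \<noteq> \<rho>" by (auto simp: U_def)
    then show ?thesis using unf True by simp
  next
    case False
    have s1: "(\<Sum>\<rho>'\<in>U. (\<Sum>r'\<in>Ln.
       (if m' = m \<and> inverse \<rho>' * inv enc (m' @ r') = t \<and> \<rho>' = \<rho> then pW else 0))
        / real (card Ln)) = (\<Sum>r'\<in>Ln.
       (if m' = m \<and> inverse \<rho> * inv enc (m' @ r') = t then pW else 0))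
        / real (card Ln)" for m'
    proof -
      have "(\<Sum>\<rho>'\<in>U. (\<Sum>r'\<in>Ln.
       (if m' = m \<and> inverse \<rho>' * inv enc (m' @ r') = t \<and> \<rho>' = \<rho> then pW else 0))
        / real (card Ln)) = (\<Sum>\<rho>'\<in>U. if \<rho>' = \<rho> then (\<Sum>r'\<in>Ln.
       (if m' = m \<and> inverse \<rho>' * inv enc (m' @ r') = t then pW else 0))
        / real (card Ln) else 0)"
        by (rule sum.cong) auto
      also have "\<dots> = (\<Sum>r'\<in>Ln.
       (if m' = m \<and> inverse \<rho> * inv enc (m' @ r') = t then pW else 0))
        / real (card Ln)"
        using False by (simp add: U_def)
      finally show ?thesis .
    qed
    have key: "(inverse \<rho> * inv enc (m @ r') = t) \<longleftrightarrow>
        (r' = drop r (enc (\<rho> * t)) \<and> m = take r (enc (\<rho> * t)))"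
      if "length m = r" "r' \<in> Ln" for r'
    proof -
      have len: "length (m @ r') = n" using that rn by (simp add: Ln_def)
      have "(inverse \<rho> * inv enc (m @ r') = t) \<longleftrightarrow> inv enc (m @ r') = \<rho> * t"
        by (metis False mult.assoc mult.left_neutral left_inverse right_inverse)
      also have "\<dots> \<longleftrightarrow> m @ r' = enc (\<rho> * t)"
      proof
        assume h: "inv enc (m @ r') = \<rho> * t"
        have "m @ r' = enc (inv enc (m @ r'))" using rangeE[OF len] by simp
        then show "m @ r' = enc (\<rho> * t)" using h by simp
      next
        assume "m @ r' = enc (\<rho> * t)"
        then show "inv enc (m @ r') = \<rho> * t" using inv_f_f[OF injE] by metis
      qed
      also have "\<dots> \<longleftrightarrow> (r' = drop r (enc (\<rho> * t)) \<and> m = take r (enc (\<rho> * t)))"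
        using that(1) by (auto simp: append_eq_conv_conj)
      finally show ?thesis .
    qed
    have s2: "(\<Sum>r'\<in>Ln. (if inverse \<rho> * inv enc (m @ r') = t then pW else 0))
        = (if m = take r (enc (\<rho> * t)) then pW else 0)" if "length m = r"
    proof -
      have "(\<Sum>r'\<in>Ln. (if inverse \<rho> * inv enc (m @ r') = t then pW else 0))
         = (\<Sum>r'\<in>Ln. (if r' = drop r (enc (\<rho> * t)) then
              (if m = take r (enc (\<rho> * t)) then pW else 0) else 0))"
        by (rule sum.cong) (auto simp: key[OF that])
      also have "\<dots> = (if m = take r (enc (\<rho> * t)) then pW else 0)"
        using rn by (simp add: Ln_def lenE finite_bool_lists)
      finally show ?thesis .
    qed
    have "pmf (ptilde enc n r W) (m, t, x, z, \<rho>) =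
       (\<Sum>m'\<in>Lr. if m' = m then (\<Sum>r'\<in>Ln.
       (if inverse \<rho> * inv enc (m @ r') = t then pW else 0))
        / real (card Ln) / real (card U) else 0) / real (card Lr)"
      unfolding unf s1
      by (intro arg_cong[where f="\<lambda>a. a / real (card Lr)"] sum.cong) auto
    also have "\<dots> = (if m = take r (enc (\<rho> * t)) then pW else 0)
        / real (card Ln) / real (card U) / real (card Lr)"
    proof (cases "length m = r")
      case True
      then have "m \<in> Lr" by (simp add: Lr_def)
      then show ?thesis using fLr by (simp add: s2[OF True])
    next
      case F: False
      have "m \<noteq> take r (enc (\<rho> * t))" using F lenE rn by auto
      moreover have "m \<notin> Lr" using F by (simp add: Lr_def)
      ultimately show ?thesis using fLr by simp
    qed
    also have "\<dots> = (if m = take r (enc (\<rho> * t)) then pW else 0)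
        / 2 ^ n / real (card U)"
    proof -
      have "real (card Ln) * real (card Lr) = 2 ^ n"
        using rn by (simp add: Ln_def Lr_def card_bool_lists flip: power_add of_nat_mult)
      moreover have "\<And>a::real. a / real (card Ln) / real (card U) / real (card Lr)
          = a / (real (card Ln) * real (card Lr)) / real (card U)"
        by (simp add: mult_ac)
      ultimately show ?thesis by simp
    qed
    finally have fin: "pmf (ptilde enc n r W) (m, t, x, z, \<rho>) =
       (if m = take r (enc (\<rho> * t)) then pW else 0) / 2 ^ n / real (card U)" .
    show ?thesis unfolding fin Fmap_def pW_def U_def using False by simp
  qed
qed

end
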